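(* Suppose $\sigma$ is an automorphism of the division ring $D$ and the skew polynomial ring $R=D[t;\sigma,\delta]$ is simple. Then there is no monic $f\in R$ of degree $m\ge 2$ such that $S_f$ is nonassociative and $D\subseteq \mathrm{Nuc}_r(S_f)$. In particular, there is no such $f$ with $S_f$ nonassociative and $D\subseteq\mathrm{Nuc}(S_f)$.
   Context: $D$ is an associative division ring, $\sigma$ a ring endomorphism of $D$, $\delta$ a left $\sigma$-derivation ($\delta$ additive, $\delta(ab)=\sigma(a)\delta(b)+\delta(a)b$). $R=D[t;\sigma,\delta]$ is the skew polynomial ring with $ta=\sigma(a)t+\delta(a)$. For monic $f\in R$ of degree $m$, $S_f$ denotes the set of polynomials of degree $<m$ with multiplication $g\circ h=$ remainder of $gh$ upon right division by $f$ (i.e. $gh=qf+r$, $\deg r<m$, and $g\circ h=r$). Associator $[x,y,z]=(xy)z-x(yz)$; $\mathrm{Nuc}_r(A)=\{x:[A,A,x]=0\}$, and $\mathrm{Nuc}(A)$ is the set of $x$ with $[x,A,A]=[A,x,A]=[A,A,x]=0$. $D$ is identified with the constant polynomials in $S_f$. *)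

theory Defs
  imports "HOL-Computational_Algebra.Polynomial"
begin

text \<open>Skew polynomials D[t;sigma,delta] over a division ring D (a type of class
division_ring) are represented by their coefficient polynomials in 'a poly
(coefficient i is the coefficient of t^i, coefficients written on the left).
Only the additive structure of 'a poly is used; the skew multiplication is
defined below from the rule t a = sigma(a) t + delta(a).\<close>

definition ring_endo :: "('a::division_ring \<Rightarrow> 'a) \<Rightarrow> bool" where
  "ring_endo \<sigma> \<longleftrightarrow> (\<forall>a b. \<sigma> (a + b) = \<sigma> a + \<sigma> b) \<and> (\<forall>a b. \<sigma> (a * b) = \<sigma> a * \<sigma> b) \<and> \<sigma> 1 = 1"

definition ring_auto :: "('a::division_ring \<Rightarrow> 'a) \<Rightarrow> bool" where
  "ring_auto \<sigma> \<longleftrightarrow> ring_endo \<sigma> \<and> bij \<sigma>"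

definition left_sigma_derivation :: "('a::division_ring \<Rightarrow> 'a) \<Rightarrow> ('a \<Rightarrow> 'a) \<Rightarrow> bool" where
  "left_sigma_derivation \<sigma> \<delta> \<longleftrightarrow> (\<forall>a b. \<delta> (a + b) = \<delta> a + \<delta> b) \<and>
     (\<forall>a b. \<delta> (a * b) = \<sigma> a * \<delta> b + \<delta> a * b)"

text \<open>Left multiplication by t: t (sum c_i t^i) = sum (sigma(c_i) t^(i+1) + delta(c_i) t^i).\<close>
definition tmul :: "('a::division_ring \<Rightarrow> 'a) \<Rightarrow> ('a \<Rightarrow> 'a) \<Rightarrow> 'a poly \<Rightarrow> 'a poly" where
  "tmul \<sigma> \<delta> p = pCons 0 (map_poly \<sigma> p) + map_poly \<delta> p"

definition lscal :: "'a::division_ring \<Rightarrow> 'a poly \<Rightarrow> 'a poly" where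
  "lscal c p = map_poly (\<lambda>x. c * x) p"

definition tshift :: "nat \<Rightarrow> 'a::zero poly \<Rightarrow> 'a poly" where
  "tshift j p = ((pCons 0) ^^ j) p"

text \<open>Skew product: (a t^i)(b t^j) = a (t^i b) t^j, extended bilinearly.\<close>
definition skew_mult :: "('a::division_ring \<Rightarrow> 'a) \<Rightarrow> ('a \<Rightarrow> 'a) \<Rightarrow> 'a poly \<Rightarrow> 'a poly \<Rightarrow> 'a poly" where
  "skew_mult \<sigma> \<delta> p q = (\<Sum>i\<le>degree p. \<Sum>j\<le>degree q.
      lscal (coeff p i) (tshift j ((tmul \<sigma> \<delta> ^^ i) [:coeff q j:])))"

definition skew_rem :: "('a::division_ring \<Rightarrow> 'a) \<Rightarrow> ('a \<Rightarrow> 'a) \<Rightarrow> 'a poly \<Rightarrow> 'a poly \<Rightarrow> 'a poly" where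
  "skew_rem \<sigma> \<delta> g f = (THE r. degree r < degree f \<and> (\<exists>q. g = skew_mult \<sigma> \<delta> q f + r))"

definition Sf_carrier :: "'a::division_ring poly \<Rightarrow> 'a poly set" where
  "Sf_carrier f = {g. degree g < degree f}"

definition Sf_mult :: "('a::division_ring \<Rightarrow> 'a) \<Rightarrow> ('a \<Rightarrow> 'a) \<Rightarrow> 'a poly \<Rightarrow> 'a poly \<Rightarrow> 'a poly \<Rightarrow> 'a poly" where
  "Sf_mult \<sigma> \<delta> f g h = skew_rem \<sigma> \<delta> (skew_mult \<sigma> \<delta> g h) f"

definition Sf_assoc :: "('a::division_ring \<Rightarrow> 'a) \<Rightarrow> ('a \<Rightarrow> 'a) \<Rightarrow> 'a poly \<Rightarrow> 'a poly \<Rightarrow> 'a poly \<Rightarrow> 'a poly \<Rightarrow> 'a poly" where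
  "Sf_assoc \<sigma> \<delta> f x y z = Sf_mult \<sigma> \<delta> f (Sf_mult \<sigma> \<delta> f x y) z - Sf_mult \<sigma> \<delta> f x (Sf_mult \<sigma> \<delta> f y z)"

definition Sf_nonassoc :: "('a::division_ring \<Rightarrow> 'a) \<Rightarrow> ('a \<Rightarrow> 'a) \<Rightarrow> 'a poly \<Rightarrow> bool" where
  "Sf_nonassoc \<sigma> \<delta> f \<longleftrightarrow> (\<exists>x\<in>Sf_carrier f. \<exists>y\<in>Sf_carrier f. \<exists>z\<in>Sf_carrier f. Sf_assoc \<sigma> \<delta> f x y z \<noteq> 0)"

definition Sf_right_nucleus :: "('a::division_ring \<Rightarrow> 'a) \<Rightarrow> ('a \<Rightarrow> 'a) \<Rightarrow> 'a poly \<Rightarrow> 'a poly set" where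
  "Sf_right_nucleus \<sigma> \<delta> f = {x \<in> Sf_carrier f. \<forall>a\<in>Sf_carrier f. \<forall>b\<in>Sf_carrier f. Sf_assoc \<sigma> \<delta> f a b x = 0}"

definition Sf_nucleus :: "('a::division_ring \<Rightarrow> 'a) \<Rightarrow> ('a \<Rightarrow> 'a) \<Rightarrow> 'a poly \<Rightarrow> 'a poly set" where
  "Sf_nucleus \<sigma> \<delta> f = {x \<in> Sf_carrier f. \<forall>a\<in>Sf_carrier f. \<forall>b\<in>Sf_carrier f.
      Sf_assoc \<sigma> \<delta> f x a b = 0 \<and> Sf_assoc \<sigma> \<delta> f a x b = 0 \<and> Sf_assoc \<sigma> \<delta> f a b x = 0}"

definition skew_ideal :: "('a::division_ring \<Rightarrow> 'a) \<Rightarrow> ('a \<Rightarrow> 'a) \<Rightarrow> 'a poly set \<Rightarrow> bool" where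
  "skew_ideal \<sigma> \<delta> I \<longleftrightarrow> 0 \<in> I \<and> (\<forall>x\<in>I. \<forall>y\<in>I. x - y \<in> I) \<and>
     (\<forall>x\<in>I. \<forall>r. skew_mult \<sigma> \<delta> r x \<in> I \<and> skew_mult \<sigma> \<delta> x r \<in> I)"

definition skew_simple :: "('a::division_ring \<Rightarrow> 'a) \<Rightarrow> ('a \<Rightarrow> 'a) \<Rightarrow> bool" where
  "skew_simple \<sigma> \<delta> \<longleftrightarrow> (\<forall>I. skew_ideal \<sigma> \<delta> I \<longrightarrow> I = {0} \<or> I = UNIV)"

end

theory Submission
  imports Defs
begin


definition Lop :: "('a::division_ring \<Rightarrow> 'a) \<Rightarrow> ('a \<Rightarrow> 'a) \<Rightarrow> 'a poly \<Rightarrow> 'a poly \<Rightarrow> 'a poly" where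
  "Lop \<sigma> \<delta> p x = (\<Sum>i\<le>degree p. lscal (coeff p i) ((tmul \<sigma> \<delta> ^^ i) x))"

lemma coeff_lscal[simp]: "coeff (lscal c p) n = c * coeff p n"
  unfolding lscal_def by (simp add: coeff_map_poly)

lemma lscal_add: "lscal c (p + q) = lscal c p + lscal c q"
  by (rule poly_eqI) (simp add: distrib_left)
lemma lscal_diff: "lscal c (p - q) = lscal c p - lscal c q"
  by (rule poly_eqI) (simp add: right_diff_distrib)
lemma lscal_zero[simp]: "lscal c 0 = 0"
  by (rule poly_eqI) simp
lemma lscal_zero_left[simp]: "lscal 0 p = 0"
  by (rule poly_eqI) simp
lemma lscal_one[simp]: "lscal 1 p = p"
  by (rule poly_eqI) simp
lemma lscal_lscal: "lscal a (lscal b p) = lscal (a * b) p"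
  by (rule poly_eqI) (simp add: mult.assoc)
lemma lscal_add_left: "lscal (a + b) p = lscal a p + lscal b p"
  by (rule poly_eqI) (simp add: distrib_right)
lemma lscal_sum: "lscal c (sum g A) = (\<Sum>i\<in>A. lscal c (g i))"
  by (rule poly_eqI) (simp add: coeff_sum sum_distrib_left)

lemma pow_lt_deg_le: "degree p \<le> n \<Longrightarrow> coeff p n = 0 \<Longrightarrow> 0 < n \<Longrightarrow> degree p < n"
  by (metis le_neq_implies_less leading_coeff_0_iff degree_0)

locale skewctx =
  fixes \<sigma> \<delta> :: "'a::division_ring \<Rightarrow> 'a"
  assumes endo: "ring_endo \<sigma>" and der: "left_sigma_derivation \<sigma> \<delta>"
begin

abbreviation "T \<equiv> tmul \<sigma> \<delta>"
abbreviation "L \<equiv> Lop \<sigma> \<delta>"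

lemma sadd: "\<sigma> (a + b) = \<sigma> a + \<sigma> b" using endo unfolding ring_endo_def by auto
lemma smul: "\<sigma> (a * b) = \<sigma> a * \<sigma> b" using endo unfolding ring_endo_def by auto
lemma s1[simp]: "\<sigma> 1 = 1" using endo unfolding ring_endo_def by auto
lemma s0[simp]: "\<sigma> 0 = 0" using sadd[of 0 0] by simp
lemma sdiff: "\<sigma> (a - b) = \<sigma> a - \<sigma> b" using sadd[of "a - b" b] by (simp add: algebra_simps)
lemma dadd: "\<delta> (a + b) = \<delta> a + \<delta> b" using der unfolding left_sigma_derivation_def by auto
lemma dmul: "\<delta> (a * b) = \<sigma> a * \<delta> b + \<delta> a * b" using der unfolding left_sigma_derivation_def by auto
lemma d0[simp]: "\<delta> 0 = 0" using dadd[of 0 0] by simp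
lemma d1[simp]: "\<delta> 1 = 0" using dmul[of 1 1] by simp
lemma ddiff: "\<delta> (a - b) = \<delta> a - \<delta> b" using dadd[of "a - b" b] by (simp add: algebra_simps)

lemma coeff_T: "coeff (T p) n = (case n of 0 \<Rightarrow> 0 | Suc k \<Rightarrow> \<sigma> (coeff p k)) + \<delta> (coeff p n)"
  unfolding tmul_def by (simp add: coeff_map_poly coeff_pCons split: nat.split)

lemma T_add: "T (p + q) = T p + T q"
  by (rule poly_eqI) (simp add: coeff_T sadd dadd split: nat.split)
lemma T_diff: "T (p - q) = T p - T q"
  by (rule poly_eqI) (simp add: coeff_T sdiff ddiff split: nat.split)
lemma T_zero[simp]: "T 0 = 0"
  by (rule poly_eqI) (simp add: coeff_T split: nat.split)
lemma Tp_add: "(T ^^ k) (p + q) = (T ^^ k) p + (T ^^ k) q"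
  by (induct k) (simp_all add: T_add)
lemma Tp_diff: "(T ^^ k) (p - q) = (T ^^ k) p - (T ^^ k) q"
  by (induct k) (simp_all add: T_diff)
lemma Tp_zero[simp]: "(T ^^ k) 0 = 0"
  by (induct k) simp_all
lemma Tp_sum: "(T ^^ k) (sum g A) = (\<Sum>i\<in>A. (T ^^ k) (g i))"
  by (induct A rule: infinite_finite_induct) (simp_all add: Tp_add)

lemma T_lscal: "T (lscal c x) = lscal (\<sigma> c) (T x) + lscal (\<delta> c) x"
  by (rule poly_eqI) (simp add: coeff_T smul dmul distrib_left split: nat.split)

lemma T_pCons0: "T (pCons 0 y) = pCons 0 (T y)"
  by (rule poly_eqI) (simp add: coeff_T coeff_pCons split: nat.split)

lemma T_pCons: "T (pCons a q) = pCons (\<delta> a) (T q + [:\<sigma> a:])"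
  by (rule poly_eqI) (simp add: coeff_T coeff_pCons split: nat.split)

lemma T_monom1: "T (monom 1 j) = monom 1 (Suc j)"
  by (rule poly_eqI) (simp add: coeff_T split: nat.split)

lemma Tp_monom1: "(T ^^ k) (monom 1 j) = monom 1 (j + k)"
  by (induct k) (simp_all add: T_monom1)

lemma Lop_bound: "degree p < N \<Longrightarrow> L p x = (\<Sum>i<N. lscal (coeff p i) ((T ^^ i) x))"
  unfolding Lop_def
  by (rule sum.mono_neutral_left) (auto simp: coeff_eq_0)

lemma Lop_add_left: "L (p + q) x = L p x + L q x"
proof -
  define N where "N = Suc (max (degree p) (degree q))"
  have "degree (p + q) < N" unfolding N_def
    by (meson degree_add_le le_imp_less_Suc max.cobounded1 max.cobounded2)
  then show ?thesis
    by (simp add: Lop_bound[of _ N] N_def lscal_add_left sum.distrib less_Suc_eq_le)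
qed

lemma Lop_zero_left[simp]: "L 0 x = 0"
  unfolding Lop_def by simp

lemma Lop_diff_left: "L (p - q) x = L p x - L q x"
  using Lop_add_left[of "p - q" q x] by (simp add: algebra_simps)

lemma Lop_sum_left: "L (sum g A) x = (\<Sum>i\<in>A. L (g i) x)"
  by (induct A rule: infinite_finite_induct) (simp_all add: Lop_add_left)

lemma Lop_pCons: "L (pCons a p) x = lscal a x + L p (T x)"
proof -
  have "degree (pCons a p) < Suc (Suc (degree p))"
    using degree_pCons_le[of a p] by simp
  then have "L (pCons a p) x = (\<Sum>i<Suc (Suc (degree p)). lscal (coeff (pCons a p) i) ((T ^^ i) x))"
    by (rule Lop_bound)
  also have "\<dots> = lscal a x + (\<Sum>i<Suc (degree p). lscal (coeff p i) ((T ^^ i) (T x)))"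
    by (subst sum.lessThan_Suc_shift) (simp add: funpow_swap1 del: sum.lessThan_Suc)
  also have "(\<Sum>i<Suc (degree p). lscal (coeff p i) ((T ^^ i) (T x))) = L p (T x)"
    by (rule Lop_bound[symmetric]) simp
  finally show ?thesis .
qed

lemma Lop_const: "L [:c:] x = lscal c x"
  by (simp add: Lop_pCons)

lemma Lop_add_right: "L p (x + y) = L p x + L p y"
  unfolding Lop_def by (simp add: Tp_add lscal_add sum.distrib)
lemma Lop_diff_right: "L p (x - y) = L p x - L p y"
  unfolding Lop_def by (simp add: Tp_diff lscal_diff sum_subtractf)
lemma Lop_zero_right[simp]: "L p 0 = 0"
  unfolding Lop_def by simp

lemma Lop_lscal_left: "L (lscal c p) x = lscal c (L p x)"
proof -
  have d: "degree (lscal c p) < Suc (degree p)"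
    by (metis degree_le coeff_eq_0 coeff_lscal mult_zero_right le_imp_less_Suc)
  show ?thesis
    by (simp add: Lop_bound[OF d] Lop_bound[of p "Suc (degree p)"] lscal_sum lscal_lscal del: sum.lessThan_Suc)
qed

lemma T_Lop: "T (L q x) = L (T q) x"
proof (induct q arbitrary: x)
  case 0
  then show ?case by simp
next
  case (pCons a q)
  show ?case
    by (simp add: Lop_pCons T_pCons T_add T_lscal pCons Lop_add_left Lop_const algebra_simps)
qed

lemma Lop_assoc: "L (L p q) x = L p (L q x)"
proof (induct p arbitrary: q)
  case 0
  then show ?case by simp
next
  case (pCons a p)
  show ?case
    by (simp add: Lop_pCons Lop_add_left Lop_lscal_left pCons T_Lop)
qed

lemma tshift_const: "tshift j [:c:] = monom c j"
  unfolding tshift_def by (induct j) (simp_all add: monom_Suc monom_0)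

lemma Tp_tshift: "(T ^^ i) (tshift j y) = tshift j ((T ^^ i) y)"
proof -
  have "T ((pCons 0 ^^ j) y) = (pCons 0 ^^ j) (T y)" for y
    by (induct j) (simp_all add: T_pCons0)
  then show ?thesis unfolding tshift_def
    by (induct i) simp_all
qed

lemma skew_mult_Lop: "skew_mult \<sigma> \<delta> p q = L p q"
proof -
  have "(\<Sum>j\<le>degree q. tshift j ((T ^^ i) [:coeff q j:])) = (T ^^ i) q" for i
  proof -
    have "(\<Sum>j\<le>degree q. tshift j ((T ^^ i) [:coeff q j:])) = (T ^^ i) (\<Sum>j\<le>degree q. monom (coeff q j) j)"
      by (simp add: Tp_tshift[symmetric] Tp_sum tshift_const)
    then show ?thesis by (simp add: poly_as_sum_of_monoms)
  qed
  then show ?thesis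
    unfolding skew_mult_def Lop_def by (simp add: lscal_sum[symmetric])
qed

end


lemma lin_dep:
  fixes v :: "nat \<Rightarrow> nat \<Rightarrow> 'a::division_ring"
  assumes "finite J" "card J > K" "\<forall>j\<in>J. \<forall>k\<ge>K. v j k = 0"
  shows "\<exists>c. (\<exists>j\<in>J. c j \<noteq> 0) \<and> (\<forall>k. (\<Sum>j\<in>J. c j * v j k) = 0)"
  using assms
proof (induction K arbitrary: J v)
  case 0
  then obtain j where "j \<in> J" by fastforce
  then show ?case using 0 by (intro exI[of _ "\<lambda>_. 1"]) auto
next
  case (Suc K)
  show ?case
  proof (cases "\<forall>j\<in>J. v j K = 0")
    case True
    then have "\<forall>j\<in>J. \<forall>k\<ge>K. v j k = 0" using Suc.prems(3)
      by (metis Suc_le_eq le_eq_less_or_eq)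
    with Suc.IH[of J v] Suc.prems show ?thesis by auto
  next
    case False
    then obtain j0 where j0: "j0 \<in> J" "v j0 K \<noteq> 0" by auto
    define J' where "J' = J - {j0}"
    define lam where "lam j = v j K * inverse (v j0 K)" for j
    define w where "w j k = v j k - lam j * v j0 k" for j k
    have fJ': "finite J'" using Suc.prems J'_def by simp
    have cJ': "card J' > K" using Suc.prems j0 J'_def by (simp add: card_Diff_singleton)
    have wz: "\<forall>j\<in>J'. \<forall>k\<ge>K. w j k = 0"
    proof (intro ballI allI impI)
      fix j k assume j: "j \<in> J'" and k: "K \<le> k"
      show "w j k = 0"
      proof (cases "k = K")
        case True
        then show ?thesis using j0 unfolding w_def lam_def by (simp add: mult.assoc)
      next
        case False
        then have "k \<ge> Suc K" using k by simp
        then show ?thesis using Suc.prems(3) j j0 unfolding w_def J'_def by simp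
      qed
    qed
    from Suc.IH[OF fJ' cJ' wz] obtain c' where
      c'1: "\<exists>j\<in>J'. c' j \<noteq> 0" and c'2: "\<forall>k. (\<Sum>j\<in>J'. c' j * w j k) = 0" by blast
    define S where "S = (\<Sum>i\<in>J'. c' i * lam i)"
    define c where "c j = (if j = j0 then - S else c' j)" for j
    show ?thesis
    proof (intro exI conjI allI)
      show "\<exists>j\<in>J. c j \<noteq> 0" using c'1 unfolding c_def J'_def by auto
    next
      fix k
      have e1: "(\<Sum>j\<in>J. c j * v j k) = c j0 * v j0 k + (\<Sum>j\<in>J'. c j * v j k)"
        using Suc.prems(1) j0 unfolding J'_def by (simp add: sum.remove)
      have e2: "(\<Sum>j\<in>J'. c j * v j k) = (\<Sum>j\<in>J'. c' j * v j k)"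
        unfolding c_def J'_def by (rule sum.cong) auto
      have "0 = (\<Sum>j\<in>J'. c' j * w j k)" using c'2 by simp
      also have "\<dots> = (\<Sum>j\<in>J'. c' j * v j k - (c' j * lam j) * v j0 k)"
        unfolding w_def by (simp add: right_diff_distrib mult.assoc)
      also have "\<dots> = (\<Sum>j\<in>J'. c' j * v j k) - S * v j0 k"
        unfolding S_def by (simp add: sum_subtractf sum_distrib_right)
      finally have "(\<Sum>j\<in>J'. c' j * v j k) = S * v j0 k" by simp
      then show "(\<Sum>j\<in>J. c j * v j k) = 0" using e1 e2 unfolding c_def by simp
    qed
  qed
qed

context skewctx begin

lemma coeff_Lop: "coeff (L p x) n = (\<Sum>i\<le>degree p. coeff p i * coeff ((T ^^ i) x) n)"
  unfolding Lop_def by (simp add: coeff_sum)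

lemma T_deg: "degree x \<le> n \<Longrightarrow> degree (T x) \<le> Suc n \<and> coeff (T x) (Suc n) = \<sigma> (coeff x n)"
  by (auto intro!: degree_le simp: coeff_T coeff_eq_0 split: nat.split)

lemma Tp_deg: "degree x \<le> n \<Longrightarrow> degree ((T ^^ k) x) \<le> n + k \<and> coeff ((T ^^ k) x) (n + k) = (\<sigma> ^^ k) (coeff x n)"
  by (induct k) (simp_all add: T_deg)

lemma sp1[simp]: "(\<sigma> ^^ k) 1 = 1"
  by (induct k) simp_all

lemma Lop_deg_le: "degree x \<le> e \<Longrightarrow> degree (L p x) \<le> degree p + e"
proof (rule degree_le, intro allI impI)
  fix n assume x: "degree x \<le> e" and n: "degree p + e < n"
  have "coeff ((T ^^ i) x) n = 0" if "i \<le> degree p" for i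
    using Tp_deg[OF x, of i] that n by (intro coeff_eq_0) simp
  then show "coeff (L p x) n = 0" by (simp add: coeff_Lop)
qed

lemma Lop_monom: "L (monom c k) y = lscal c ((T ^^ k) y)"
proof (induct k arbitrary: y)
  case 0
  then show ?case by (simp add: monom_0 Lop_const)
next
  case (Suc k)
  then show ?case by (simp add: monom_Suc Lop_pCons funpow_swap1)
qed

context
  fixes f :: "'a poly" and m :: nat
  assumes fm: "degree f = m" and f1: "coeff f m = 1" and m0: "m > 0"
begin

lemma Tp_f: "degree ((T ^^ k) f) \<le> m + k \<and> coeff ((T ^^ k) f) (m + k) = 1"
  using Tp_deg[of f m k] fm f1 by simp

lemma Lop_f_deg: "s \<noteq> 0 \<Longrightarrow> degree (L s f) \<ge> m"
proof -
  assume s: "s \<noteq> 0"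
  define d where "d = degree s"
  have "coeff (L s f) (d + m) = (\<Sum>i\<le>d. coeff s i * coeff ((T ^^ i) f) (d + m))"
    by (simp add: coeff_Lop d_def)
  also have "\<dots> = coeff s d * coeff ((T ^^ d) f) (d + m) + (\<Sum>i\<in>{..d} - {d}. coeff s i * coeff ((T ^^ i) f) (d + m))"
    by (rule sum.remove) auto
  also have "(\<Sum>i\<in>{..d} - {d}. coeff s i * coeff ((T ^^ i) f) (d + m)) = 0"
  proof (rule sum.neutral, intro ballI)
    fix i assume "i \<in> {..d} - {d}"
    then have "i < d" by auto
    then have "coeff ((T ^^ i) f) (d + m) = 0" using Tp_f[of i] by (intro coeff_eq_0) simp
    then show "coeff s i * coeff ((T ^^ i) f) (d + m) = 0" by simp
  qed
  finally have "coeff (L s f) (d + m) = coeff s d" using Tp_f[of d] by (simp add: add.commute)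
  then have "coeff (L s f) (d + m) \<noteq> 0" using s d_def by simp
  then have "d + m \<le> degree (L s f)" by (rule le_degree)
  then show ?thesis by simp
qed

lemma div_exists: "\<exists>q r. degree r < m \<and> g = L q f + r"
proof (induction "degree g" arbitrary: g rule: less_induct)
  case less
  show ?case
  proof (cases "degree g < m")
    case True
    then show ?thesis by (intro exI[of _ 0] exI[of _ g]) simp
  next
    case False
    define n where "n = degree g"
    define k where "k = n - m"
    define c where "c = coeff g n"
    define g' where "g' = g - L (monom c k) f"
    have nk: "m + k = n" using False n_def k_def by simp
    have hL: "L (monom c k) f = lscal c ((T ^^ k) f)" by (rule Lop_monom)
    have dL: "degree (L (monom c k) f) \<le> n"
      unfolding hL using Tp_f[of k] nk by (intro degree_le) (auto simp: coeff_eq_0)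
    have dg: "degree g' \<le> n" unfolding g'_def n_def
      using dL n_def by (intro order_trans[OF degree_diff_le_max]) simp
    moreover have "coeff ((T ^^ k) f) n = 1" using Tp_f[of k] nk by simp
    moreover have "coeff g' n = c - c * coeff ((T ^^ k) f) n" unfolding g'_def hL by (simp add: c_def)
    ultimately have "coeff g' n = 0" by (simp add: c_def)
    moreover have "n > 0" using False n_def m0 by simp
    ultimately have "degree g' < degree g" using pow_lt_deg_le[of g' n] n_def dg by simp
    from less(1)[OF this] obtain q r where qr: "degree r < m" "g' = L q f + r" by blast
    have "g = g' + L (monom c k) f" unfolding g'_def by simp
    then have "g = L (q + monom c k) f + r" using qr(2) by (simp add: Lop_add_left add_ac)
    with qr show ?thesis by blast
  qed
qed

lemma rem_eq: "degree r < m \<Longrightarrow> g = L q f + r \<Longrightarrow> skew_rem \<sigma> \<delta> g f = r"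
  unfolding skew_rem_def skew_mult_Lop fm
proof (rule the_equality)
  assume "degree r < m" "g = L q f + r"
  then show "degree r < m \<and> (\<exists>q. g = L q f + r)" by blast
next
  fix r' assume r: "degree r < m" "g = L q f + r" and r': "degree r' < m \<and> (\<exists>q. g = L q f + r')"
  then obtain q' where q': "g = L q' f + r'" by blast
  have e: "L (q - q') f = r' - r" using r(2) q' by (simp add: Lop_diff_left algebra_simps)
  show "r' = r"
  proof (cases "q - q' = 0")
    case True
    then show ?thesis using e by simp
  next
    case False
    have "degree (r' - r) < m" using r r'
      using degree_diff_le_max[of r' r] r(1) conjunct1[OF r'] by linarith
    then show ?thesis using Lop_f_deg[OF False] e by simp
  qed
qed

lemma rem_spec: "degree (skew_rem \<sigma> \<delta> g f) < m \<and> g = L (SOME q. g = L q f + skew_rem \<sigma> \<delta> g f) f + skew_rem \<sigma> \<delta> g f"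
proof -
  obtain q r where qr: "degree r < m" "g = L q f + r" using div_exists by blast
  then have "skew_rem \<sigma> \<delta> g f = r" by (rule rem_eq)
  then have "\<exists>q. g = L q f + skew_rem \<sigma> \<delta> g f" using qr by blast
  then have "g = L (SOME q. g = L q f + skew_rem \<sigma> \<delta> g f) f + skew_rem \<sigma> \<delta> g f" by (rule someI_ex)
  then show ?thesis using qr \<open>skew_rem \<sigma> \<delta> g f = r\<close> by simp
qed

end
end


context skewctx begin

lemma sp_surj: "bij \<sigma> \<Longrightarrow> \<exists>x. (\<sigma> ^^ d) x = y"
proof (induct d arbitrary: y)
  case 0
  then show ?case by auto
next
  case (Suc d)
  obtain z where "\<sigma> z = y" using Suc.prems by (metis bij_pointE)
  moreover obtain x where "(\<sigma> ^^ d) x = z" using Suc by blast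
  ultimately show ?case by auto
qed

lemma main_contra:
  assumes bij: "bij \<sigma>" and simple: "skew_simple \<sigma> \<delta>"
   and fm: "degree f = m" and f1: "coeff f m = 1" and m2: "m \<ge> 2"
   and nuc: "\<forall>c. [:c:] \<in> Sf_right_nucleus \<sigma> \<delta> f"
  shows False
proof -
  have m0: "m > 0" using m2 by simp
  note rem_eq' = rem_eq[OF fm f1 m0] and rem_spec' = rem_spec[OF fm f1 m0]
    and Lop_f_deg' = Lop_f_deg[OF fm f1 m0]
  have Rm: "Sf_mult \<sigma> \<delta> f a b = skew_rem \<sigma> \<delta> (L a b) f" for a b
    unfolding Sf_mult_def skew_mult_Lop ..
  define h where "h = monom 1 m - f"
  have dh: "degree h < m"
  proof -
    have "degree h \<le> m - 1"
    proof (rule degree_le, intro allI impI)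
      fix i assume "m - 1 < i"
      then have "i = m \<or> i > m" by auto
      then show "coeff h i = 0" unfolding h_def using f1 fm by (auto simp: coeff_eq_0)
    qed
    then show ?thesis using m0 by simp
  qed
  have semi: "\<exists>q. L f [:c:] = L q f" for c
  proof -
    define a :: "'a poly" where "a = monom 1 (m - 1)"
    define b :: "'a poly" where "b = monom 1 1"
    have a_in: "a \<in> Sf_carrier f" unfolding a_def Sf_carrier_def using fm m0
      by (simp add: degree_monom_eq)
    have b_in: "b \<in> Sf_carrier f" unfolding b_def Sf_carrier_def using fm m2
      by (simp add: degree_monom_eq)
    from nuc a_in b_in have as0: "Sf_assoc \<sigma> \<delta> f a b [:c:] = 0"
      unfolding Sf_right_nucleus_def by blast
    have mm: "m = Suc (m - 1)" using m0 by simp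
    have "L a b = monom 1 m" unfolding a_def b_def
      using m0 by (simp add: Lop_monom Tp_monom1)
    then have ab: "Sf_mult \<sigma> \<delta> f a b = h" unfolding Rm
      by (intro rem_eq'[OF dh, of _ "[:1:]"]) (simp add: Lop_const h_def)
    have dhc: "degree (L h [:c:]) < m" using Lop_deg_le[of "[:c:]" 0 h] dh by simp
    have abx: "Sf_mult \<sigma> \<delta> f h [:c:] = L h [:c:]" unfolding Rm
      by (intro rem_eq'[OF dhc, of _ 0]) simp
    have Lb: "L b [:c:] = T [:c:]" unfolding b_def by (simp add: Lop_monom)
    have dTc: "degree (T [:c:]) < m" using T_deg[of "[:c:]" 0] m2 by simp
    have bx: "Sf_mult \<sigma> \<delta> f b [:c:] = T [:c:]" unfolding Rm Lb
      by (intro rem_eq'[OF dTc, of _ 0]) simp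
    have "(T ^^ (m-1)) (T [:c:]) = (T ^^ Suc (m-1)) [:c:]" by (simp add: funpow_swap1)
    then have "L a (T [:c:]) = (T ^^ m) [:c:]" using m0 by (simp add: Lop_monom a_def)
    then have abx2: "Sf_mult \<sigma> \<delta> f a (Sf_mult \<sigma> \<delta> f b [:c:]) = skew_rem \<sigma> \<delta> ((T ^^ m) [:c:]) f"
      unfolding bx by (simp add: Rm)
    from as0 have "skew_rem \<sigma> \<delta> ((T ^^ m) [:c:]) f = L h [:c:]"
      unfolding Sf_assoc_def ab abx abx2 by simp
    with rem_spec'[of "(T ^^ m) [:c:]"] obtain Q where Q: "(T ^^ m) [:c:] = L Q f + L h [:c:]" by metis
    have "f = monom 1 m - h" unfolding h_def by simp
    then have "L f [:c:] = (T ^^ m) [:c:] - L h [:c:]"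
      by (simp add: Lop_diff_left Lop_monom)
    then show ?thesis using Q by auto
  qed
  define K where "K = {p. \<forall>y. \<exists>s. L p y = L s f}"
  have idl: "skew_ideal \<sigma> \<delta> K"
    unfolding skew_ideal_def skew_mult_Lop
  proof (intro conjI ballI allI)
    show "0 \<in> K" unfolding K_def by (auto intro: exI[of _ 0])
  next
    fix x y assume x: "x \<in> K" and y: "y \<in> K"
    show "x - y \<in> K" unfolding K_def
    proof (intro CollectI allI)
      fix z
      obtain s1 where "L x z = L s1 f" using x K_def by blast
      moreover obtain s2 where "L y z = L s2 f" using y K_def by blast
      ultimately show "\<exists>s. L (x - y) z = L s f" by (auto simp: Lop_diff_left intro!: exI[of _ "s1 - s2"])
    qed
  next
    fix x r assume x: "x \<in> K"
    show "L r x \<in> K" unfolding K_def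
    proof (intro CollectI allI)
      fix z
      obtain s where "L x z = L s f" using x K_def by blast
      then show "\<exists>s. L (L r x) z = L s f" by (auto simp: Lop_assoc intro!: exI[of _ "L r s"])
    qed
    show "L x r \<in> K" unfolding K_def
    proof (intro CollectI allI)
      fix z
      obtain s where "L x (L r z) = L s f" using x K_def by blast
      then show "\<exists>s. L (L x r) z = L s f" by (auto simp: Lop_assoc)
    qed
  qed
  have K1: "[:1:] \<notin> K"
  proof
    assume "[:1:] \<in> K"
    then obtain s where s: "L [:1:] [:1:] = L s f" unfolding K_def by blast
    then have s1: "[:1:] = L s f" by (simp add: Lop_const)
    show False
    proof (cases "s = 0")
      case True
      then show False using s1 by simp
    next
      case False
      then show False using Lop_f_deg'[OF False] s1[symmetric] m2 by simp
    qed
  qed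
  then have K0: "K = {0}" using simple idl unfolding skew_simple_def by blast
  define N where "N = m * m"
  define v where "v j k = (if k < N then coeff (skew_rem \<sigma> \<delta> ((T ^^ j) (monom 1 (k div m))) f) (k mod m) else 0)" for j k
  have "\<exists>c. (\<exists>j\<in>{..N}. c j \<noteq> 0) \<and> (\<forall>k. (\<Sum>j\<in>{..N}. c j * v j k) = 0)"
    by (rule lin_dep[where K=N]) (simp_all add: v_def)
  then obtain c where c1: "\<exists>j\<in>{..N}. c j \<noteq> 0" and c2: "\<forall>k. (\<Sum>j\<le>N. c j * v j k) = 0" by blast
  define p where "p = (\<Sum>j\<le>N. monom (c j) j)"
  have p0: "p \<noteq> 0"
  proof -
    obtain j0 where j0: "j0 \<le> N" "c j0 \<noteq> 0" using c1 by auto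
    have "coeff p j0 = c j0" unfolding p_def using j0 by (simp add: coeff_sum)
    then show ?thesis using j0 by auto
  qed
  have Lp: "L p y = (\<Sum>j\<le>N. lscal (c j) ((T ^^ j) y))" for y
    by (simp add: p_def Lop_sum_left Lop_monom)
  have cl1: "\<exists>s. L p (monom 1 i) = L s f" if i: "i < m" for i
  proof -
    define R where "R j = skew_rem \<sigma> \<delta> ((T ^^ j) (monom 1 i)) f" for j
    define Q where "Q j = (SOME q. (T ^^ j) (monom 1 i) = L q f + R j)" for j
    have QR: "(T ^^ j) (monom 1 i) = L (Q j) f + R j" for j
      using rem_spec' unfolding Q_def R_def by blast
    have dR: "degree (R j) < m" for j
      using rem_spec' unfolding R_def by blast
    have z: "(\<Sum>j\<le>N. lscal (c j) (R j)) = 0"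
    proof (rule poly_eqI)
      fix n
      show "coeff (\<Sum>j\<le>N. lscal (c j) (R j)) n = coeff 0 n"
      proof (cases "n < m")
        case True
        define k where "k = n + i * m"
        have "i * m + m \<le> m * m" using i
          by (metis Suc_leI add.commute mult.commute mult_Suc_right mult_le_mono2)
        then have kN: "k < N" unfolding k_def N_def using True by linarith
        have kd: "k div m = i" and km: "k mod m = n" unfolding k_def using True by auto
        have "v j k = coeff (R j) n" for j unfolding v_def R_def using kN kd km by simp
        then show ?thesis using c2[rule_format, of k] by (simp add: coeff_sum)
      next
        case False
        then have "coeff (R j) n = 0" for j using dR[of j] by (intro coeff_eq_0) simp
        then show ?thesis by (simp add: coeff_sum)
      qed
    qed
    have "L p (monom 1 i) = (\<Sum>j\<le>N. lscal (c j) (L (Q j) f + R j))"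
      unfolding Lp using QR by simp
    also have "\<dots> = (\<Sum>j\<le>N. L (lscal (c j) (Q j)) f) + (\<Sum>j\<le>N. lscal (c j) (R j))"
      by (simp add: lscal_add sum.distrib Lop_lscal_left)
    also have "\<dots> = L (\<Sum>j\<le>N. lscal (c j) (Q j)) f"
      using z by (simp add: Lop_sum_left)
    finally show ?thesis by blast
  qed
  have Zadd: "\<exists>s. L p (y1 + y2) = L s f" if h1: "\<exists>s. L p y1 = L s f" and h2: "\<exists>s. L p y2 = L s f" for y1 y2
  proof -
    obtain s1 s2 where "L p y1 = L s1 f" "L p y2 = L s2 f" using h1 h2 by blast
    then show ?thesis by (auto simp: Lop_add_right Lop_add_left intro!: exI[of _ "s1 + s2"])
  qed
  have cl2: "\<exists>s. L p ((T ^^ i) [:d:]) = L s f" if i: "i < m" for i d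
  proof -
    obtain s where s: "L p (monom 1 i) = L s f" using cl1[OF i] by blast
    obtain q where q: "L f [:d:] = L q f" using semi by blast
    have "L p ((T ^^ i) [:d:]) = L p (L (monom 1 i) [:d:])" by (simp add: Lop_monom)
    also have "\<dots> = L (L s f) [:d:]" by (simp add: Lop_assoc[symmetric] s)
    also have "\<dots> = L (L s q) f" by (simp add: Lop_assoc q)
    finally show ?thesis by blast
  qed
  have cl3: "degree r < m \<longrightarrow> (\<exists>s. L p r = L s f)" for r
  proof (induction "degree r" arbitrary: r rule: less_induct)
    case less
    show ?case
    proof (intro impI)
      assume dr: "degree r < m"
      show "\<exists>s. L p r = L s f"
      proof (cases "r = 0")
        case True
        then show ?thesis by (auto intro: exI[of _ 0])
      next
        case False
        define d where "d = degree r"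
        obtain e where e: "(\<sigma> ^^ d) e = coeff r d" using sp_surj[OF bij] by blast
        define r' where "r' = r - (T ^^ d) [:e:]"
        have td: "degree ((T ^^ d) [:e:]) \<le> d" "coeff ((T ^^ d) [:e:]) d = coeff r d"
          using Tp_deg[of "[:e:]" 0 d] e by simp_all
        have dr': "degree r' \<le> d" unfolding r'_def d_def using td d_def
          by (intro order_trans[OF degree_diff_le_max]) simp
        have cr': "coeff r' d = 0" unfolding r'_def using td by simp
        have rr: "r = r' + (T ^^ d) [:e:]" unfolding r'_def by simp
        have hT: "\<exists>s. L p ((T ^^ d) [:e:]) = L s f" using cl2 dr d_def by blast
        show ?thesis
        proof (cases "r' = 0")
          case True
          then show ?thesis using hT rr by simp
        next
          case False
          have "d > 0"
          proof (rule ccontr)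
            assume "\<not> d > 0"
            then have "degree r' = 0" using dr' by simp
            then have "r' = [:coeff r' 0:]" by (metis degree_0_id)
            then show False using False cr' \<open>\<not> d > 0\<close> by simp
          qed
          then have "degree r' < degree r" using pow_lt_deg_le[OF dr' cr'] d_def by simp
          then have "\<exists>s. L p r' = L s f" using less.hyps dr by (meson order.strict_trans)
          then show ?thesis using Zadd[OF _ hT] rr by simp
        qed
      qed
    qed
  qed
  have "p \<in> K" unfolding K_def
  proof (intro CollectI allI)
    fix y
    define R where "R = skew_rem \<sigma> \<delta> y f"
    obtain Q where Q: "y = L Q f + R" using rem_spec'[of y] unfolding R_def by blast
    have "\<exists>s. L p R = L s f" using cl3 rem_spec'[of y] unfolding R_def by blast
    moreover have "\<exists>s. L p (L Q f) = L s f" by (auto simp: Lop_assoc[symmetric])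
    ultimately show "\<exists>s. L p y = L s f" using Zadd Q by metis
  qed
  then show False using K0 p0 by simp
qed

end

theorem mainTheorem2:
  fixes \<sigma> \<delta> :: "'a::division_ring \<Rightarrow> 'a"
  assumes "ring_auto \<sigma>"
    and "left_sigma_derivation \<sigma> \<delta>"
    and "skew_simple \<sigma> \<delta>"
  shows "\<not> (\<exists>f. lead_coeff f = 1 \<and> degree f \<ge> 2 \<and> Sf_nonassoc \<sigma> \<delta> f \<and>
                (\<forall>c. [:c:] \<in> Sf_right_nucleus \<sigma> \<delta> f))
       \<and> \<not> (\<exists>f. lead_coeff f = 1 \<and> degree f \<ge> 2 \<and> Sf_nonassoc \<sigma> \<delta> f \<and>
                (\<forall>c. [:c:] \<in> Sf_nucleus \<sigma> \<delta> f))"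
proof -
  interpret skewctx \<sigma> \<delta>
    using assms(1,2) by unfold_locales (auto simp: ring_auto_def)
  have bij: "bij \<sigma>" using assms(1) by (simp add: ring_auto_def)
  have A: "\<not> (\<exists>f. lead_coeff f = 1 \<and> degree f \<ge> 2 \<and> Sf_nonassoc \<sigma> \<delta> f \<and>
                (\<forall>c. [:c:] \<in> Sf_right_nucleus \<sigma> \<delta> f))"
    using main_contra[OF bij assms(3) refl] by blast
  have sub: "Sf_nucleus \<sigma> \<delta> f \<subseteq> Sf_right_nucleus \<sigma> \<delta> f" for f
    unfolding Sf_nucleus_def Sf_right_nucleus_def by blast
  show ?thesis using A sub by blast
qed

end
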